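(* Let $\omega\in\mathbb{R}$, let $f$ and $f_0=f'$ be as in the context, and let $T\in(1,t_m]$. Let $\rho>0$ and $v^i$ be $C^1$ on $[1,T)\times(\mathbb{R}^3\setminus\{0\})$ and solve $\partial_t\rho+\partial_i(\rho v^i)=0$ with $\rho|_{t=1}=\frac{\iota^3}{6\pi}(1+\beta\mathcal d(|\mathbf x|))$, and let $s\in C^1$ solve $$\partial_ts+v^i\partial_is=-\Big(\frac23+\omega\Big)\partial_i\check v^i+\frac{2\check v^ix_i}{|\mathbf x|^2},\qquad s|_{t=1}=\ln\Big(\frac{(1+\beta\mathcal d(|\mathbf x|))^{2/3+\omega}}{(1+\beta)^{\omega}}|\mathbf x|^2\Big),$$ where $\check v^i:=v^i-\big(\frac{2}{3t}-\frac{f_0}{3(1+f)}\big)x^i$. Assume every point of $[1,T)\times(\mathbb{R}^3\setminus\{0\})$ lies on an integral curve of $\partial_t+v^i\partial_i$ starting on $\{t=1\}$. Then, with $\varrho:=\rho/\mathring\rho-1$ and $\mathring\rho=\frac{\iota^3}{6\pi t^2}$, $$s=\ln\Big(t^{-4/3}\frac{(1+\varrho)^{2/3+\omega}}{(1+f)^{\omega}}|\mathbf x|^2\Big),\qquad\text{and hence}\qquad p=Ke^s\rho^{4/3}=Kt^{-4/3}\frac{(1+\varrho)^{2/3+\omega}}{(1+f)^{\omega}}|\mathbf x|^2\rho^{4/3}.$$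
   Context: $f\in C^2([1,t_m))$ solves $f''+\frac{4}{3t}f'-\frac{2}{3t^2}f(1+f)-\frac{4(f')^2}{3(1+f)}=0$, $f(1)=\beta>0$, $f'(1)=3(1+\beta)\gamma$, $\gamma>0$, on its maximal interval $[1,t_m)$; $K>0$ and $\iota\in(0,1)$ are constants; $\mathcal d:(0,\infty)\to\mathbb{R}$ with $1+\beta\mathcal d>0$; $|\mathbf x|^2=\delta_{kl}x^kx^l$, $x_i=\delta_{ij}x^j$, summation convention. *)

theory Defs
  imports "HOL-Analysis.Analysis" "HOL-Library.Extended_Real"
begin

definition Ival :: "ereal \<Rightarrow> real set" where
  "Ival b = {t. 1 \<le> t \<and> ereal t < b}"

definition fsol ::
  "real \<Rightarrow> real \<Rightarrow> (real \<Rightarrow> real) \<Rightarrow> (real \<Rightarrow> real) \<Rightarrow> (real \<Rightarrow> real) \<Rightarrow> ereal \<Rightarrow> bool" where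
  "fsol \<beta> \<gamma> f f0 f2 b \<longleftrightarrow>
     1 < b \<and>
     (\<forall>t\<in>Ival b. (f has_real_derivative f0 t) (at t within Ival b)) \<and>
     (\<forall>t\<in>Ival b. (f0 has_real_derivative f2 t) (at t within Ival b)) \<and>
     continuous_on (Ival b) f2 \<and>
     (\<forall>t\<in>Ival b. 1 + f t \<noteq> 0 \<and>
        f2 t + 4 / (3 * t) * f0 t - 2 / (3 * t\<^sup>2) * f t * (1 + f t)
          - 4 * (f0 t)\<^sup>2 / (3 * (1 + f t)) = 0) \<and>
     f 1 = \<beta> \<and> f0 1 = 3 * (1 + \<beta>) * \<gamma>"

definition fsol_max ::
  "real \<Rightarrow> real \<Rightarrow> (real \<Rightarrow> real) \<Rightarrow> (real \<Rightarrow> real) \<Rightarrow> (real \<Rightarrow> real) \<Rightarrow> ereal \<Rightarrow> bool" where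
  "fsol_max \<beta> \<gamma> f f0 f2 tm \<longleftrightarrow> fsol \<beta> \<gamma> f f0 f2 tm \<and>
     (\<forall>g g0 g2 b. fsol \<beta> \<gamma> g g0 g2 b \<longrightarrow> b \<le> tm)"

definition etime :: "real \<times> (real^3)" where "etime = (1, 0)"
definition espace :: "3 \<Rightarrow> real \<times> (real^3)" where "espace i = (0, axis i 1)"

end

theory Submission
  imports Defs
begin

lemma vec_dir: "(h, h *\<^sub>R (w::real^3)) = h *\<^sub>R (etime + (\<Sum>i\<in>UNIV. w$i *\<^sub>R espace i))"
  by (simp add: etime_def espace_def sum_3 vec_eq_iff forall_3 axis_def)

lemma lin_dir:
  fixes L :: "real \<times> (real^3) \<Rightarrow> real"
  assumes "linear L"
  shows "L (h, h *\<^sub>R w) = h * (L etime + (\<Sum>i\<in>UNIV. w$i * L (espace i)))"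
proof -
  interpret linear L by fact
  show ?thesis unfolding vec_dir by (simp add: add sum scale)
qed

lemma f_pos:
  assumes hf: "fsol \<beta> \<gamma> f f0 f2 tm" and b: "\<beta> > 0" and t: "1 \<le> \<tau>" "ereal \<tau> < tm"
  shows "1 + f \<tau> > 0"
proof (rule ccontr)
  assume "\<not> 1 + f \<tau> > 0"
  hence neg: "1 + f \<tau> \<le> 0" by simp
  have sub: "{1..\<tau>} \<subseteq> Ival tm" using t by (auto simp: Ival_def) (meson ereal_less_eq(3) le_less_trans)
  have "\<forall>u\<in>Ival tm. (f has_real_derivative f0 u) (at u within Ival tm)"
    using hf by (simp add: fsol_def)
  hence "((\<lambda>u. 1 + f u) has_real_derivative f0 u) (at u within {1..\<tau>})" if u: "u \<in> {1..\<tau>}" for u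
  proof -
    have "(f has_real_derivative f0 u) (at u within {1..\<tau>})"
      using DERIV_subset[OF _ sub] u sub \<open>\<forall>u\<in>Ival tm. _\<close> by blast
    thus ?thesis by (auto intro!: derivative_eq_intros)
  qed
  hence "continuous_on {1..\<tau>} (\<lambda>u. 1 + f u)" by (rule DERIV_continuous_on)
  moreover have "1 + f 1 = 1 + \<beta>" using hf by (simp add: fsol_def)
  ultimately obtain u where u: "1 \<le> u" "u \<le> \<tau>" "1 + f u = 0"
    using IVT2'[of "\<lambda>u. 1 + f u" \<tau> 0 1] neg b t by auto
  hence "u \<in> Ival tm" using sub by auto
  thus False using hf u by (auto simp: fsol_def)
qed

lemma ln_form: fixes a b c k p q :: real
  assumes "a>0" "b>0" "c>0" "k>0"
  shows "ln (k * a powr p / b powr q * c) = ln k + p*ln a - q*ln b + ln c"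
  using assms by (simp add: ln_mult ln_div)
lemma ln_form1: fixes a b c p q :: real
  assumes "a>0" "b>0" "c>0"
  shows "ln (a powr p / b powr q * c) = p*ln a - q*ln b + ln c"
  using ln_form[OF assms zero_less_one] by simp
lemma r1: fixes A D :: real assumes "A>0" "D>0" shows "ln (A * D) = ln A + ln D" using assms by (simp add: ln_mult)
lemma lr0: fixes A t :: real assumes "A>0" "t>0" shows "ln (A/t\<^sup>2) = ln A - 2 * ln t" using assms by (simp add: ln_div ln_realpow)
lemma pos: fixes k a b c p q :: real assumes "k>0" "a>0" "b>0" "c>0"
  shows "k * a powr p / b powr q * c > 0"
  using assms by simp

lemma alg: fixes r F n tau dv wx w g :: real
  assumes "r>0" "F>0" "n>0" "tau>0"
  shows "(-(2/3+w)*(dv - 3*(2/(3*tau) - g/(3*F))) + 2*(wx - (2/(3*tau) - g/(3*F))*n)/n)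
     - (2/3+w)*(1/r*(-r*dv)) - 2*w*(1/tau) + w*(1/F*(0+g)) - 1/n*(2*wx) = 0"
proof -
  have "2*(wx - (2/(3*tau) - g/(3*F))*n)/n = 2*wx/n - 2*(2/(3*tau) - g/(3*F))" using assms by (simp add: field_simps)
  moreover have "(2/3+w)*(1/r*(-r*dv)) = -(2/3+w)*dv" using assms by (simp add: algebra_simps)
  moreover have "1/n*(2*wx) = 2*wx/n" by simp
  moreover have "1/F*(0+g) = g/F" by simp
  ultimately show ?thesis using assms by (simp add: field_simps) 
qed

theorem lemmat:
  fixes \<omega> \<beta> \<gamma> K \<iota> T :: real
    and tm :: ereal
    and f f0 f2 :: "real \<Rightarrow> real"
    and d :: "real \<Rightarrow> real"
    and \<rho> s :: "real \<times> (real^3) \<Rightarrow> real"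
    and v :: "real \<times> (real^3) \<Rightarrow> real^3"
    and D\<rho> Ds :: "real \<times> (real^3) \<Rightarrow> real \<times> (real^3) \<Rightarrow> real"
    and Dv :: "real \<times> (real^3) \<Rightarrow> real \<times> (real^3) \<Rightarrow> real^3"
  defines "Dom \<equiv> {1..<T} \<times> (UNIV - {0::real^3})"
  defines "c \<equiv> (\<lambda>t. 2 / (3 * t) - f0 t / (3 * (1 + f t)))"
  defines "vchk \<equiv> (\<lambda>(t, x). v (t, x) - c t *\<^sub>R x)"
  defines "rho0 \<equiv> (\<lambda>t. \<iota> ^ 3 / (6 * pi * t\<^sup>2))"
  assumes hbeta: "\<beta> > 0" and hgamma: "\<gamma> > 0"
    and hf: "fsol_max \<beta> \<gamma> f f0 f2 tm"
    and hK: "K > 0" and hiota: "0 < \<iota>" "\<iota> < 1"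
    and hd: "\<forall>r>0. 1 + \<beta> * d r > 0"
    and hT: "1 < T" "ereal T \<le> tm"
    and \<rho>_pos: "\<forall>q\<in>Dom. \<rho> q > 0"
    and \<rho>_C1: "\<forall>q\<in>Dom. (\<rho> has_derivative D\<rho> q) (at q within Dom)"
             "\<forall>h. continuous_on Dom (\<lambda>q. D\<rho> q h)"
    and v_C1: "\<forall>q\<in>Dom. (v has_derivative Dv q) (at q within Dom)"
             "\<forall>h. continuous_on Dom (\<lambda>q. Dv q h)"
    and s_C1: "\<forall>q\<in>Dom. (s has_derivative Ds q) (at q within Dom)"
             "\<forall>h. continuous_on Dom (\<lambda>q. Ds q h)"
    and cont_eq: "\<forall>q\<in>Dom. D\<rho> q etime
        + (\<Sum>i\<in>UNIV. D\<rho> q (espace i) * v q $ i + \<rho> q * Dv q (espace i) $ i) = 0"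
    and \<rho>_init: "\<forall>x. x \<noteq> 0 \<longrightarrow> \<rho> (1, x) = \<iota> ^ 3 / (6 * pi) * (1 + \<beta> * d (norm x))"
    and s_eq: "\<forall>q\<in>Dom. Ds q etime + (\<Sum>i\<in>UNIV. v q $ i * Ds q (espace i))
        = - (2/3 + \<omega>) * (\<Sum>i\<in>UNIV. Dv q (espace i) $ i - c (fst q))
          + 2 * (vchk q \<bullet> snd q) / (norm (snd q))\<^sup>2"
    and s_init: "\<forall>x. x \<noteq> 0 \<longrightarrow> s (1, x) =
        ln ((1 + \<beta> * d (norm x)) powr (2/3 + \<omega>) / (1 + \<beta>) powr \<omega> * (norm x)\<^sup>2)"
    and charac: "\<forall>(t, x)\<in>Dom. \<exists>X :: real \<Rightarrow> real^3. X t = x \<and>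
        (\<forall>\<tau>\<in>{1..t}. X \<tau> \<noteq> 0 \<and>
           (X has_vector_derivative v (\<tau>, X \<tau>)) (at \<tau> within {1..t}))"
  shows "\<forall>(t, x)\<in>Dom.
     s (t, x) = ln (t powr (-4/3) * (\<rho> (t, x) / rho0 t) powr (2/3 + \<omega>)
                      / (1 + f t) powr \<omega> * (norm x)\<^sup>2)
   \<and> K * exp (s (t, x)) * \<rho> (t, x) powr (4/3)
       = K * t powr (-4/3) * (\<rho> (t, x) / rho0 t) powr (2/3 + \<omega>)
           / (1 + f t) powr \<omega> * (norm x)\<^sup>2 * \<rho> (t, x) powr (4/3)"

proof -
  have fs: "fsol \<beta> \<gamma> f f0 f2 tm" using hf by (simp add: fsol_max_def)
  have fder: "\<forall>u\<in>Ival tm. (f has_real_derivative f0 u) (at u within Ival tm)"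
    using fs by (simp add: fsol_def)
  have main: "s (t, x) = ln (t powr (-4/3) * (\<rho> (t, x) / rho0 t) powr (2/3 + \<omega>)
                      / (1 + f t) powr \<omega> * (norm x)\<^sup>2)
     \<and> t powr (-4/3) * (\<rho> (t, x) / rho0 t) powr (2/3 + \<omega>)
                      / (1 + f t) powr \<omega> * (norm x)\<^sup>2 > 0"
    if tx: "(t, x) \<in> Dom" for t x
  proof -
    have t1: "1 \<le> t" "t < T" "x \<noteq> 0" using tx by (auto simp: Dom_def)
    obtain X where X: "X t = x" "\<forall>\<tau>\<in>{1..t}. X \<tau> \<noteq> 0 \<and>
           (X has_vector_derivative v (\<tau>, X \<tau>)) (at \<tau> within {1..t})"
      using bspec[OF charac tx] by (simp only: case_prod_conv) blast
    have qD: "(\<tau>, X \<tau>) \<in> Dom" if "\<tau> \<in> {1..t}" for \<tau>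
      using that X t1 by (auto simp: Dom_def)
    have subI: "{1..t} \<subseteq> Ival tm"
    proof
      fix u assume u: "u \<in> {1..t}"
      hence "ereal u < ereal T" using t1 by simp
      hence "ereal u < tm" using hT(2) by (rule less_le_trans)
      thus "u \<in> Ival tm" using u by (simp add: Ival_def)
    qed
    have tpos: "1 + f \<tau> > 0" if "\<tau> \<in> {1..t}" for \<tau>
    proof -
      have "\<tau> \<in> Ival tm" using that subI by blast
      thus ?thesis using f_pos[OF fs hbeta] by (simp add: Ival_def)
    qed
    define G where "G \<tau> = s (\<tau>, X \<tau>) - (2/3+\<omega>) * ln (\<rho> (\<tau>, X \<tau>)) - 2*\<omega>*ln \<tau>
       + \<omega> * ln (1 + f \<tau>) - ln (X \<tau> \<bullet> X \<tau>)" for \<tau>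
    have Gd: "(G has_real_derivative 0) (at \<tau> within {1..t})" if \<tau>: "\<tau> \<in> {1..t}" for \<tau>
    proof -
      let ?q = "(\<tau>, X \<tau>)"
      let ?w = "v ?q"
      have Xd: "(X has_derivative (\<lambda>h. h *\<^sub>R ?w)) (at \<tau> within {1..t})"
        using X \<tau> by (simp add: has_vector_derivative_def)
      have qd: "((\<lambda>\<tau>. (\<tau>, X \<tau>)) has_derivative (\<lambda>h. (h, h *\<^sub>R ?w))) (at \<tau> within {1..t})"
        by (rule has_derivative_Pair[OF has_derivative_ident Xd])
      have sd: "((\<lambda>\<tau>. s (\<tau>, X \<tau>)) has_derivative (\<lambda>h. Ds ?q (h, h *\<^sub>R ?w))) (at \<tau> within {1..t})"
        by (rule has_derivative_in_compose2[of Dom s Ds, OF _ _ \<tau> qd]) (use s_C1 qD in auto)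
      have rd: "((\<lambda>\<tau>. \<rho> (\<tau>, X \<tau>)) has_derivative (\<lambda>h. D\<rho> ?q (h, h *\<^sub>R ?w))) (at \<tau> within {1..t})"
        by (rule has_derivative_in_compose2[of Dom \<rho> D\<rho>, OF _ _ \<tau> qd]) (use \<rho>_C1 qD in auto)
      have linS: "linear (Ds ?q)" using s_C1 qD[OF \<tau>] has_derivative_linear by blast
      have linR: "linear (D\<rho> ?q)" using \<rho>_C1 qD[OF \<tau>] has_derivative_linear by blast
      define Sd where "Sd = Ds ?q etime + (\<Sum>i\<in>UNIV. ?w$i * Ds ?q (espace i))"
      define Rd where "Rd = D\<rho> ?q etime + (\<Sum>i\<in>UNIV. ?w$i * D\<rho> ?q (espace i))"
      have sd': "((\<lambda>\<tau>. s (\<tau>, X \<tau>)) has_real_derivative Sd) (at \<tau> within {1..t})"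
        unfolding has_field_derivative_def
        by (rule has_derivative_eq_rhs[OF sd]) (auto simp: lin_dir[OF linS] Sd_def mult.commute)
      have rd': "((\<lambda>\<tau>. \<rho> (\<tau>, X \<tau>)) has_real_derivative Rd) (at \<tau> within {1..t})"
        unfolding has_field_derivative_def
        by (rule has_derivative_eq_rhs[OF rd]) (auto simp: lin_dir[OF linR] Rd_def mult.commute)
      have fd: "(f has_real_derivative f0 \<tau>) (at \<tau> within {1..t})"
        using DERIV_subset[OF _ subI] fder subI \<tau> by blast
      have xxd: "((\<lambda>\<tau>. X \<tau> \<bullet> X \<tau>) has_real_derivative 2 * (X \<tau> \<bullet> ?w)) (at \<tau> within {1..t})"
        unfolding has_field_derivative_def
        by (rule has_derivative_eq_rhs[OF has_derivative_inner[OF Xd Xd]])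
           (auto simp: inner_commute algebra_simps)
      have rpos: "\<rho> ?q > 0" using \<rho>_pos qD[OF \<tau>] by auto
      have fp: "1 + f \<tau> > 0" using tpos \<tau> .
      have xp: "X \<tau> \<bullet> X \<tau> > 0" using X \<tau> by auto
      have tp: "\<tau> > 0" using \<tau> by auto
      have d1: "((\<lambda>\<tau>. ln (\<rho> (\<tau>, X \<tau>))) has_real_derivative 1 / \<rho> ?q * Rd) (at \<tau> within {1..t})"
        by (rule DERIV_chain2[OF DERIV_ln_divide[OF rpos] rd'])
      have d2: "(ln has_real_derivative 1 / \<tau>) (at \<tau> within {1..t})"
        by (rule has_field_derivative_at_within[OF DERIV_ln_divide[OF tp]])
      have fd1: "((\<lambda>\<tau>. 1 + f \<tau>) has_real_derivative 0 + f0 \<tau>) (at \<tau> within {1..t})"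
        by (rule DERIV_add[OF DERIV_const fd])
      have d3: "((\<lambda>\<tau>. ln (1 + f \<tau>)) has_real_derivative 1 / (1 + f \<tau>) * (0 + f0 \<tau>)) (at \<tau> within {1..t})"
        by (rule DERIV_chain2[OF DERIV_ln_divide[OF fp] fd1])
      have d4: "((\<lambda>\<tau>. ln (X \<tau> \<bullet> X \<tau>)) has_real_derivative 1 / (X \<tau> \<bullet> X \<tau>) * (2 * (X \<tau> \<bullet> ?w))) (at \<tau> within {1..t})"
        by (rule DERIV_chain2[OF DERIV_ln_divide[OF xp] xxd])
      have Gd1: "((\<lambda>\<tau>. s (\<tau>, X \<tau>) - (2/3+\<omega>) * ln (\<rho> (\<tau>, X \<tau>)) - 2*\<omega>*ln \<tau>
       + \<omega> * ln (1 + f \<tau>) - ln (X \<tau> \<bullet> X \<tau>)) has_real_derivative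
         Sd - (2/3+\<omega>) * (1 / \<rho> ?q * Rd) - 2*\<omega>*(1/\<tau>) + \<omega> * (1 / (1 + f \<tau>) * (0 + f0 \<tau>))
           - 1 / (X \<tau> \<bullet> X \<tau>) * (2 * (X \<tau> \<bullet> ?w))) (at \<tau> within {1..t})"
        by (intro DERIV_diff DERIV_add DERIV_cmult sd' d1 d2 d3 d4)
      have Geqf: "G = (\<lambda>\<tau>. s (\<tau>, X \<tau>) - (2/3+\<omega>) * ln (\<rho> (\<tau>, X \<tau>)) - 2*\<omega>*ln \<tau>
       + \<omega> * ln (1 + f \<tau>) - ln (X \<tau> \<bullet> X \<tau>))" by (rule ext) (simp add: G_def)
      let ?dv = "\<Sum>i\<in>UNIV. Dv ?q (espace i) $ i"
      have E: "D\<rho> ?q etime + (\<Sum>i\<in>UNIV. D\<rho> ?q (espace i) * ?w $ i) + \<rho> ?q * ?dv = 0"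
        using cont_eq qD[OF \<tau>] by (simp add: sum.distrib sum_distrib_left add.assoc)
      have sw: "(\<Sum>i\<in>UNIV. ?w$i * D\<rho> ?q (espace i)) = (\<Sum>i\<in>UNIV. D\<rho> ?q (espace i) * ?w$i)"
        by (rule sum.cong) (simp_all add: mult.commute)
      have R: "Rd = - \<rho> ?q * ?dv" using E sw unfolding Rd_def by linarith
      have S: "Sd = - (2/3 + \<omega>) * (?dv - 3 * c \<tau>) + 2 * (?w \<bullet> X \<tau> - c \<tau> * (X \<tau> \<bullet> X \<tau>)) / (X \<tau> \<bullet> X \<tau>)"
        using s_eq qD[OF \<tau>] unfolding Sd_def
        by (simp add: sum_subtractf vchk_def inner_diff_left power2_norm_eq_inner)
      have "Sd - (2/3+\<omega>) * (1 / \<rho> ?q * Rd) - 2*\<omega>*(1/\<tau>) + \<omega> * (1 / (1 + f \<tau>) * (0 + f0 \<tau>))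
           - 1 / (X \<tau> \<bullet> X \<tau>) * (2 * (X \<tau> \<bullet> ?w)) = 0"
        unfolding R S c_def inner_commute[of "X \<tau>" ?w] by (rule alg[OF rpos fp xp tp])
      thus ?thesis using Gd1 unfolding Geqf by (simp add: DERIV_cong)
    qed
    obtain C where C: "\<forall>u\<in>{1..t}. G u = C"
      using has_field_derivative_zero_constant[of "{1..t}" G] Gd by auto
    hence Geq: "G t = G 1" using t1 by auto
    define A where "A = \<iota> ^ 3 / (6 * pi)"
    have Ap: "A > 0" using hiota by (simp add: A_def)
    have x1: "X 1 \<noteq> 0" using X t1 by auto
    have dp: "1 + \<beta> * d (norm (X 1)) > 0" using hd x1 by auto
    have f1: "f 1 = \<beta>" using fs by (simp add: fsol_def)
    have nx1: "norm (X 1) ^ 2 > 0" using x1 by simp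
    have s1: "s (1, X 1) = (2/3+\<omega>) * ln (1 + \<beta> * d (norm (X 1))) - \<omega> * ln (1 + \<beta>) + ln (norm (X 1) ^ 2)"
      using s_init x1 ln_form1[OF dp _ nx1, of "1+\<beta>" "2/3+\<omega>" \<omega>] hbeta by simp
    have r1: "ln (\<rho> (1, X 1)) = ln A + ln (1 + \<beta> * d (norm (X 1)))"
      using \<rho>_init x1 r1[OF Ap dp] unfolding A_def by simp
    have G1: "G 1 = - (2/3+\<omega>) * ln A"
      unfolding G_def s1 r1 f1 power2_norm_eq_inner by (simp add: algebra_simps)
    have rp: "\<rho> (t, x) > 0" using \<rho>_pos tx by auto
    have fp: "1 + f t > 0" using tpos t1 by auto
    have tp: "t > 0" using t1 by auto
    have r0: "rho0 t = A / t\<^sup>2" by (simp add: rho0_def A_def)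
    have lr0: "ln (rho0 t) = ln A - 2 * ln t" unfolding r0 using lr0[OF Ap tp] .
    have r0p: "rho0 t > 0" unfolding r0 using Ap tp by simp
    have rr: "\<rho> (t, x) / rho0 t > 0" using rp r0p by simp
    have nx: "norm x ^ 2 > 0" using t1 by simp
    have tt: "t powr (-4/3) > 0" using tp by simp
    have pos: "t powr (-4/3) * (\<rho> (t, x) / rho0 t) powr (2/3 + \<omega>)
                      / (1 + f t) powr \<omega> * (norm x)\<^sup>2 > 0"
      using pos[OF tt rr fp nx] .
    have "ln (t powr (-4/3) * (\<rho> (t, x) / rho0 t) powr (2/3 + \<omega>)
                      / (1 + f t) powr \<omega> * (norm x)\<^sup>2)
        = ln (t powr (-4/3)) + (2/3+\<omega>) * ln (\<rho> (t, x) / rho0 t) - \<omega> * ln (1 + f t) + ln (x \<bullet> x)"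
      using ln_form[OF rr fp nx tt] by (simp add: power2_norm_eq_inner)
    also have "\<dots> = -(4/3) * ln t + (2/3+\<omega>) * (ln (\<rho> (t, x)) - ln (rho0 t)) - \<omega> * ln (1 + f t) + ln (x \<bullet> x)"
      using rp r0p by (simp add: ln_div)
    also have "\<dots> = s (t, x)"
    proof -
      have Geq': "G t = - (2/3+\<omega>) * ln A" using Geq G1 by simp
      thus ?thesis unfolding G_def X(1) lr0 by (simp add: algebra_simps)
    qed
    finally show ?thesis using pos by simp
  qed
  show ?thesis
  proof (intro ballI)
    fix q assume q: "q \<in> Dom"
    obtain t x where qq: "q = (t, x)" by (cases q)
    define P where "P = t powr (-4/3) * (\<rho> (t, x) / rho0 t) powr (2/3 + \<omega>)
                      / (1 + f t) powr \<omega> * (norm x)\<^sup>2"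
    have m: "s (t, x) = ln P" "P > 0" using main[OF q[unfolded qq]] unfolding P_def by auto
    have e: "exp (s (t, x)) = P" using m by (simp add: exp_ln)
    show "case q of (t, x) \<Rightarrow> s (t, x) = ln (t powr (-4/3) * (\<rho> (t, x) / rho0 t) powr (2/3 + \<omega>)
                      / (1 + f t) powr \<omega> * (norm x)\<^sup>2)
   \<and> K * exp (s (t, x)) * \<rho> (t, x) powr (4/3)
       = K * t powr (-4/3) * (\<rho> (t, x) / rho0 t) powr (2/3 + \<omega>)
           / (1 + f t) powr \<omega> * (norm x)\<^sup>2 * \<rho> (t, x) powr (4/3)"
      unfolding qq prod.case e using m(1) unfolding P_def by (simp add: mult.assoc)
  qed
qed

end
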